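(* For every $d\ge1$ there exist constants $c_d>0$ and $\epsilon_d>0$, depending only on $d$, such that: if $S=\{x_0,\dots,x_d\}\subset\mathbb{R}^d$ satisfies $\mathrm{diam}(S)\le 1$ and $\mathtt{rad}(S)\ge(1-\epsilon)\sqrt{\frac{d}{2(d+1)}}$ for some $0<\epsilon\le\epsilon_d$, then there exists the vertex set $\Delta$ of a regular simplex of diameter (edge length) $1$ with $\mathrm{dist}_H(S,\Delta)\le c_d\,\epsilon$.
   Context: For a bounded set $A\subset\mathbb{R}^d$, $\mathtt{rad}(A)=\inf_{c\in\mathbb{R}^d}\sup_{y\in A}\|c-y\|_2$ is its Chebyshev radius and $\mathrm{diam}(A)=\sup_{x,y\in A}\|x-y\|_2$. A regular simplex of edge length $1$ is a set of $d+1$ points at pairwise distance exactly $1$. For nonempty compact $A,B\subset\mathbb{R}^d$, $\mathrm{dist}_H(A,B)=\max\{\sup_{a\in A}\inf_{b\in B}\|a-b\|_2,\ \sup_{b\in B}\inf_{a\in A}\|a-b\|_2\}$. *)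

theory Defs
  imports "HOL-Analysis.Analysis"
begin

definition cheb_rad :: "'a::euclidean_space set \<Rightarrow> real" where
  "cheb_rad A = (INF c. SUP y\<in>A. dist c y)"

definition haus_dist :: "'a::metric_space set \<Rightarrow> 'a set \<Rightarrow> real" where
  "haus_dist A B = max (SUP a\<in>A. INF b\<in>B. dist a b) (SUP b\<in>B. INF a\<in>A. dist a b)"

definition regular_unit_simplex :: "'a::euclidean_space set \<Rightarrow> bool" where
  "regular_unit_simplex D \<longleftrightarrow> finite D \<and> card D = DIM('a) + 1 \<and>
     (\<forall>u\<in>D. \<forall>v\<in>D. u \<noteq> v \<longrightarrow> dist u v = 1)"

end

theory Submission
  imports Defs
begin


lemma simplex_gram:
  fixes y :: "nat \<Rightarrow> 'a::real_inner" and k :: nat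
  assumes reg: "\<forall>i\<le>k. \<forall>j\<le>k. i \<noteq> j \<longrightarrow> dist (y i) (y j) = 1"
  defines "g \<equiv> (1 / real (k+1)) *\<^sub>R (\<Sum>i\<le>k. y i)"
  shows "\<forall>i\<le>k. \<forall>j\<le>k. inner (y i - g) (y j - g) = (if i = j then 1/2 else 0) - 1 / (2 * real (k+1))"
proof -
  define N where "N = real (k+1)"
  have N: "N > 0" by (simp add: N_def)
  have sumzero: "(\<Sum>j\<le>k. (y j - g)) = 0"
    by (simp add: sum_subtractf g_def sum_constant_scaleR)
  define s where "s i = inner (y i - g) (y i - g)" for i
  have Gsum: "(\<Sum>j\<le>k. inner (y i - g) (y j - g)) = 0" for i
    by (simp add: inner_sum_right[symmetric] sumzero)
  have dsq: "inner (y i - y j) (y i - y j) = s i + s j - 2 * inner (y i - g) (y j - g)" for i j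
  proof -
    have "y i - y j = (y i - g) - (y j - g)" by simp
    then show ?thesis unfolding s_def by (simp add: inner_diff_left inner_diff_right inner_commute)
  qed
  have dd: "inner (y i - y j) (y i - y j) = (if i = j then 0 else 1)" if "i \<le> k" "j \<le> k" for i j
    using reg that by (auto simp: dist_norm power2_norm_eq_inner[symmetric])
  have rowsum: "(\<Sum>j\<le>k. inner (y i - y j) (y i - y j)) = real k" if "i \<le> k" for i
  proof -
    have "(\<Sum>j\<le>k. inner (y i - y j) (y i - y j)) = (\<Sum>j\<le>k. (if i = j then 0 else 1::real))"
      using dd that by (intro sum.cong) auto
    also have "\<dots> = real (card ({..k} - {i}))"
      by (simp add: sum.If_cases Diff_eq)
    also have "\<dots> = real k" using that by simp
    finally show ?thesis .
  qed
  have si: "N * s i + (\<Sum>j\<le>k. s j) = real k" if "i \<le> k" for i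
  proof -
    have "real k = (\<Sum>j\<le>k. s i + s j - 2 * inner (y i - g) (y j - g))"
      using rowsum[OF that] dsq by simp
    also have "\<dots> = N * s i + (\<Sum>j\<le>k. s j) - 2 * (\<Sum>j\<le>k. inner (y i - g) (y j - g))"
      by (simp add: sum.distrib sum_subtractf sum_distrib_left N_def)
    finally show ?thesis using Gsum by simp
  qed
  have sall: "s i = s 0" if "i \<le> k" for i
  proof -
    have "N * s i = N * s 0" using si[OF that] si[of 0] by linarith
    then show ?thesis using N by simp
  qed
  have "(\<Sum>j\<le>k. s j) = (\<Sum>j\<le>k. s 0)"
  proof (rule sum.cong)
    fix j assume "j \<in> {..k}"
    then show "s j = s 0" by (intro sall) simp
  qed simp
  then have "(\<Sum>j\<le>k. s j) = N * s 0" by (simp add: N_def)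
  then have s0: "s 0 = real k / (2 * N)"
    using si[of 0] N by (simp add: field_simps)
  show ?thesis
  proof (intro allI impI)
    fix i j assume ij: "i \<le> k" "j \<le> k"
    show "inner (y i - g) (y j - g) = (if i = j then 1/2 else 0) - 1 / (2 * real (k+1))"
    proof (cases "i = j")
      case True
      then show ?thesis using sall[OF ij(1)] s0 s_def N by (simp add: N_def field_simps)
    next
      case False
      have "1 = s i + s j - 2 * inner (y i - g) (y j - g)"
        using dsq[of i j] dd[OF ij] False by simp
      moreover have "s i = real k / (2 * N)" "s j = real k / (2 * N)"
        using sall[OF ij(1)] sall[OF ij(2)] s0 by simp_all
      ultimately have "inner (y i - g) (y j - g) = real k / (2 * N) - 1/2" by linarith
      also have "\<dots> = - 1 / (2 * real (k+1))" by (simp add: N_def field_simps)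
      finally show ?thesis using False by simp
    qed
  qed
qed

lemma inner_expand_aux:
  fixes u v :: "'a::real_inner"
  shows "inner (c *\<^sub>R u - v) (c *\<^sub>R u - v) = c^2 * inner u u - 2 * c * inner u v + inner v v"
  by (simp add: inner_diff_left inner_diff_right inner_commute power2_eq_square algebra_simps)

lemma step_lemma:
  fixes y :: "nat \<Rightarrow> 'a::real_inner" and x :: 'a and k :: nat and \<eta> :: real
  assumes reg: "\<forall>i\<le>k. \<forall>j\<le>k. i \<noteq> j \<longrightarrow> dist (y i) (y j) = 1"
    and near: "\<forall>i\<le>k. (dist x (y i))^2 \<le> 1 + \<eta> \<and> 1 - \<eta> \<le> (dist x (y i))^2"
    and eta0: "0 \<le> \<eta>" and etas: "\<eta> \<le> 1 / (4 * real (k+1))"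
  shows "\<exists>z. (\<forall>i\<le>k. dist z (y i) = 1) \<and> dist z x \<le> (real k + 5) * \<eta>"
proof -
  define N where "N = real (k+1)"
  have N: "N \<ge> 1" by (simp add: N_def)
  define g where "g = (1 / real (k+1)) *\<^sub>R (\<Sum>i\<le>k. y i)"
  have G: "\<And>i j. i \<le> k \<Longrightarrow> j \<le> k \<Longrightarrow> inner (y i - g) (y j - g) = (if i = j then 1/2 else 0) - 1 / (2 * N)"
    using simplex_gram[OF reg] unfolding g_def N_def by blast
  define s where "s = 1/2 - 1/(2*N)"
  have s: "\<And>i. i \<le> k \<Longrightarrow> inner (y i - g) (y i - g) = s" using G s_def by simp
  have sumzero: "(\<Sum>j\<le>k. (y j - g)) = 0"
    by (simp add: sum_subtractf g_def sum_constant_scaleR)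
  define a where "a j = inner (x - g) (y j - g)" for j
  have asum: "(\<Sum>j\<le>k. a j) = 0"
    unfolding a_def by (simp add: inner_sum_right[symmetric] sumzero)
  define p where "p = 2 *\<^sub>R (\<Sum>i\<le>k. a i *\<^sub>R (y i - g))"
  have pj: "inner p (y j - g) = a j" if "j \<le> k" for j
  proof -
    have "inner p (y j - g) = 2 * (\<Sum>i\<le>k. a i * ((if i = j then 1/2 else 0) - 1 / (2 * N)))"
      unfolding p_def using G that by (simp add: inner_sum_left)
    also have "\<dots> = 2 * (\<Sum>i\<le>k. (if i = j then a i / 2 else 0) - a i / (2 * N))"
      by (intro arg_cong[where f="\<lambda>t. 2 * t"] sum.cong) (auto simp: field_simps)
    also have "\<dots> = a j - (\<Sum>i\<le>k. a i) / N"
      using that by (simp add: sum_subtractf sum_divide_distrib[symmetric])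
    finally show ?thesis using asum by simp
  qed
  define q where "q = x - g - p"
  have qj: "inner q (y j - g) = 0" if "j \<le> k" for j
    using pj[OF that] unfolding q_def a_def by (simp add: inner_diff_left)
  have qp: "inner q p = 0"
    unfolding p_def by (simp add: inner_sum_right qj)
  have pp: "inner p p = 2 * (\<Sum>i\<le>k. (a i)^2)"
  proof -
    have "inner p p = inner (2 *\<^sub>R (\<Sum>i\<le>k. a i *\<^sub>R (y i - g))) p"
      by (simp only: p_def[symmetric])
    also have "\<dots> = 2 * (\<Sum>i\<le>k. a i * inner (y i - g) p)"
      by (simp add: inner_sum_left)
    also have "\<dots> = 2 * (\<Sum>i\<le>k. (a i)^2)"
    proof -
      have "\<And>i. i \<in> {..k} \<Longrightarrow> a i * inner (y i - g) p = (a i)^2"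
        using pj by (metis atMost_iff inner_commute power2_eq_square)
      then show ?thesis by (metis (no_types, lifting) sum.cong)
    qed
    finally show ?thesis .
  qed
  have xy: "(dist x (y j))^2 = inner (x - g) (x - g) - 2 * a j + s" if "j \<le> k" for j
  proof -
    have "x - y j = (x - g) - (y j - g)" by simp
    then have "(dist x (y j))^2 = inner ((x - g) - (y j - g)) ((x - g) - (y j - g))"
      by (simp add: dist_norm power2_norm_eq_inner)
    then show ?thesis using s[OF that] unfolding a_def
      by (simp add: inner_diff_left inner_diff_right inner_commute)
  qed
  define T where "T = inner (x - g) (x - g) + s"
  have Tsum: "(\<Sum>j\<le>k. (dist x (y j))^2) = N * T"
  proof -
    have "(\<Sum>j\<le>k. (dist x (y j))^2) = (\<Sum>j\<le>k. T - 2 * a j)"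
      using xy by (intro sum.cong) (auto simp: T_def)
    also have "\<dots> = N * T"
      using asum by (simp add: sum_subtractf sum_distrib_left[symmetric] N_def)
    finally show ?thesis .
  qed
  have Tlo: "1 - \<eta> \<le> T"
  proof -
    have "(\<Sum>j\<le>k. 1 - \<eta>) \<le> (\<Sum>j\<le>k. (dist x (y j))^2)"
      using near by (intro sum_mono) auto
    then have "N * (1 - \<eta>) \<le> N * T" using Tsum by (simp add: N_def)
    then show ?thesis using N by simp
  qed
  have Thi: "T \<le> 1 + \<eta>"
  proof -
    have "(\<Sum>j\<le>k. (dist x (y j))^2) \<le> (\<Sum>j\<le>k. 1 + \<eta>)"
      using near by (intro sum_mono) auto
    then have "N * T \<le> N * (1 + \<eta>)" using Tsum by (simp add: N_def)
    then show ?thesis using N by simp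
  qed
  have abound: "(a j)^2 \<le> \<eta>^2" if "j \<le> k" for j
  proof -
    have aj: "2 * a j = T - (dist x (y j))^2" using xy[OF that] T_def by simp
    moreover have "(dist x (y j))^2 \<le> 1+\<eta>" "1-\<eta> \<le> (dist x (y j))^2" using near that by auto
    ultimately have "a j \<le> \<eta>" using Tlo Thi by linarith
    moreover have "-\<eta> \<le> a j" using aj \<open>(dist x (y j))^2 \<le> 1+\<eta>\<close> Tlo by linarith
    ultimately have "\<bar>a j\<bar> \<le> \<eta>" by (simp add: abs_le_iff)
    then show ?thesis by (metis abs_ge_zero power2_abs power_mono)
  qed
  have ppb: "inner p p \<le> 2 * (N * \<eta>^2)"
  proof -
    have "(\<Sum>i\<le>k. (a i)^2) \<le> (\<Sum>i\<le>k. \<eta>^2)" using abound by (intro sum_mono) auto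
    then have "(\<Sum>i\<le>k. (a i)^2) \<le> N * \<eta>^2" by (simp add: N_def)
    then show ?thesis using pp by linarith
  qed
  have xg: "x - g = p + q" unfolding q_def by simp
  have qq: "inner q q = inner (x - g) (x - g) - inner p p"
    unfolding xg using qp by (simp add: inner_add_left inner_add_right inner_commute)
  define \<rho> where "\<rho> = sqrt (1 - s)"
  have s_lo: "0 \<le> s" and s_hi: "s \<le> 1/2" using N by (auto simp: s_def field_simps)
  have rho2: "\<rho>^2 = 1 - s" using s_hi by (simp add: \<rho>_def)
  have rho_lo: "\<rho>^2 \<ge> 1/2" using rho2 s_hi by simp
  have rho_pos: "\<rho> > 0" using s_hi by (simp add: \<rho>_def)
  have etaN: "2 * (N * \<eta>^2) \<le> \<eta> / 2"
  proof -
    have "N * \<eta> \<le> 1/4" using etas N by (simp add: N_def field_simps)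
    then have "(N * \<eta>) * \<eta> \<le> (1/4) * \<eta>" using eta0 by (rule mult_right_mono)
    moreover have "N * \<eta>^2 = (N * \<eta>) * \<eta>" by (simp add: power2_eq_square)
    ultimately show ?thesis by linarith
  qed
  have eta_small: "\<eta> \<le> 1/4"
  proof -
    have "1 / (4 * real (k+1)) \<le> 1/4" by (simp add: field_simps)
    then show ?thesis using etas by linarith
  qed
  have qlo: "inner q q \<ge> \<rho>^2 - 3/2 * \<eta>"
    using qq ppb etaN Tlo rho2 T_def by linarith
  have qhi: "inner q q \<le> \<rho>^2 + \<eta>"
    using qq Thi rho2 T_def inner_ge_zero[of p] by linarith
  define nq where "nq = norm q"
  have nq2: "nq^2 = inner q q" by (simp add: nq_def power2_norm_eq_inner)
  have nq_pos: "nq > 0"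
  proof -
    have "inner q q > 0" using qlo rho_lo eta_small by linarith
    then show ?thesis using nq2 by (simp add: nq_def)
  qed
  define z where "z = g + (\<rho> / nq) *\<^sub>R q"
  have zdist: "dist z (y i) = 1" if "i \<le> k" for i
  proof -
    have "z - y i = (\<rho> / nq) *\<^sub>R q - (y i - g)" by (simp add: z_def algebra_simps)
    then have "(dist z (y i))^2 = inner ((\<rho> / nq) *\<^sub>R q - (y i - g)) ((\<rho> / nq) *\<^sub>R q - (y i - g))"
      by (simp only: dist_norm power2_norm_eq_inner)
    also have "\<dots> = (\<rho>/nq)^2 * inner q q - 2 * (\<rho>/nq) * inner q (y i - g) + inner (y i - g) (y i - g)"
      by (rule inner_expand_aux)
    also have "\<dots> = \<rho>^2 + s" using qj[OF that] s[OF that] nq_pos by (simp add: nq2[symmetric] power_divide)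
    also have "\<dots> = 1" using rho2 by simp
    finally have h: "(dist z (y i))^2 = 1" .
    show ?thesis using h zero_le_dist[of z "y i"] by (smt (verit) power2_eq_1_iff)
  qed
  have zx: "(dist z x)^2 = (\<rho> - nq)^2 + inner p p"
  proof -
    have "z - x = (\<rho> / nq - 1) *\<^sub>R q - p" using xg by (simp add: z_def algebra_simps)
    then have "(dist z x)^2 = inner ((\<rho> / nq - 1) *\<^sub>R q - p) ((\<rho> / nq - 1) *\<^sub>R q - p)"
      by (simp only: dist_norm power2_norm_eq_inner)
    also have "\<dots> = (\<rho>/nq - 1)^2 * inner q q - 2 * (\<rho>/nq - 1) * inner q p + inner p p"
      by (rule inner_expand_aux)
    also have "\<dots> = (\<rho> - nq)^2 + inner p p" using qp nq_pos
      by (simp add: nq2[symmetric] power2_eq_square field_simps)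
    finally show ?thesis .
  qed
  have rq: "(\<rho> - nq)^2 \<le> 2 * (3/2 * \<eta>)^2"
  proof -
    have "(\<rho> - nq)^2 * (\<rho> + nq)^2 = (\<rho>^2 - nq^2)^2" by (simp add: power2_eq_square algebra_simps)
    moreover have "(\<rho>^2 - nq^2)^2 \<le> (3/2 * \<eta>)^2"
    proof -
      have "\<rho>^2 - nq^2 \<le> 3/2 * \<eta>" "-(3/2 * \<eta>) \<le> \<rho>^2 - nq^2" using qlo qhi nq2 eta0 by linarith+
      then have "\<bar>\<rho>^2 - nq^2\<bar> \<le> 3/2 * \<eta>" by (subst abs_le_iff, intro conjI, linarith, linarith)
      then show ?thesis by (metis abs_ge_zero power2_abs power_mono)
    qed
    moreover have "(\<rho> + nq)^2 \<ge> 1/2"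
    proof -
      have "\<rho>^2 \<le> (\<rho> + nq)^2" using nq_pos rho_pos by (intro power_mono) auto
      then show ?thesis using rho_lo by linarith
    qed
    ultimately have "(\<rho> - nq)^2 * (1/2) \<le> (3/2 * \<eta>)^2"
    proof -
      assume a1: "(\<rho> - nq)^2 * (\<rho> + nq)^2 = (\<rho>^2 - nq^2)^2"
        and a2: "(\<rho>^2 - nq^2)^2 \<le> (3/2 * \<eta>)^2" and a3: "(\<rho> + nq)^2 \<ge> 1/2"
      have "(\<rho> - nq)^2 * (1/2) \<le> (\<rho> - nq)^2 * (\<rho> + nq)^2"
        using a3 by (intro mult_left_mono) auto
      then show ?thesis using a1 a2 by linarith
    qed
    then show ?thesis by simp
  qed
  have "(dist z x)^2 \<le> ((real k + 5) * \<eta>)^2"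
  proof -
    have A: "(dist z x)^2 \<le> 2 * (3/2 * \<eta>)^2 + 2 * (N * \<eta>^2)" using zx rq ppb by linarith
    have B: "2 * (3/2 * \<eta>)^2 + 2 * (N * \<eta>^2) = (9/2 + 2 * N) * \<eta>^2"
      by (simp add: power2_eq_square algebra_simps)
    have k2: "(real k + 5)^2 = real k * real k + 10 * real k + 25"
      by (simp add: power2_eq_square algebra_simps)
    have kk: "0 \<le> real k * real k" by simp
    have C: "9/2 + 2 * N \<le> (real k + 5)^2" using k2 kk unfolding N_def by simp
    have D: "(9/2 + 2 * N) * \<eta>^2 \<le> (real k + 5)^2 * \<eta>^2"
      using C by (rule mult_right_mono) simp
    have E: "((real k + 5) * \<eta>)^2 = (real k + 5)^2 * \<eta>^2" by (rule power_mult_distrib)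
    show ?thesis using A B D E by linarith
  qed
  moreover have "0 \<le> (real k + 5) * \<eta>" using eta0 by simp
  ultimately have "dist z x \<le> (real k + 5) * \<eta>"
    by (rule power2_le_imp_le)
  then show ?thesis using zdist by blast
qed

lemma near_aux:
  fixes a b E m :: real
  assumes "0 \<le> E" "E \<le> 1/4" "0 \<le> m" "m \<le> 1/4" "1 - m \<le> a^2" "a \<le> 1" "0 \<le> a" "b \<le> a + E" "a - E \<le> b" "0 \<le> b"
  shows "b^2 \<le> 1 + (m + 3*E) \<and> 1 - (m + 3*E) \<le> b^2"
proof
  have "b \<le> 1 + E" using assms by linarith
  then have "b^2 \<le> (1+E)^2" using assms by (intro power_mono) auto
  also have "\<dots> = 1 + 2*E + E*E" by (simp add: power2_eq_square algebra_simps)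
  also have "\<dots> \<le> 1 + 3*E" using mult_right_le_one_le[of E E] assms(1,2) by linarith
  finally show "b^2 \<le> 1 + (m + 3*E)" using assms by linarith
next
  have "a \<ge> 1/2"
  proof (rule ccontr)
    assume "\<not> a \<ge> 1/2"
    then have "a^2 \<le> (1/2)^2" using assms by (intro power_mono) auto
    then show False using assms by (simp add: power2_eq_square)
  qed
  then have ab: "a - E \<le> b" "0 \<le> a - E" using assms by linarith+
  then have "(a - E)^2 \<le> b^2" by (intro power_mono) auto
  moreover have "(a - E)^2 = a^2 - 2*a*E + E*E" by (simp add: power2_eq_square algebra_simps)
  moreover have "a * E \<le> E" using assms by (simp add: mult_left_le_one_le)
  moreover have "E * E \<ge> 0" by simp
  ultimately show "1 - (m + 3*E) \<le> b^2" using assms by linarith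
qed

fun Bc :: "real \<Rightarrow> nat \<Rightarrow> real" where
  "Bc M 0 = 0"
| "Bc M (Suc k) = (real k + 5) * (M + 3 * Bc M k)"

lemma Bc_nonneg: "0 \<le> M \<Longrightarrow> 0 \<le> Bc M k"
  by (induction k) auto

lemma Bc_mono: "0 \<le> M \<Longrightarrow> Bc M k \<le> Bc M (Suc k)"
proof -
  assume M: "0 \<le> M"
  have "Bc M k \<le> 3 * Bc M k" using Bc_nonneg[OF M, of k] by simp
  also have "\<dots> \<le> M + 3 * Bc M k" using M by simp
  also have "\<dots> \<le> (real k + 5) * (M + 3 * Bc M k)"
  proof -
    have "0 \<le> (real k + 4) * (M + 3 * Bc M k)" using M Bc_nonneg[OF M, of k] by simp
    moreover have "(real k + 5) * (M + 3 * Bc M k) = (real k + 4) * (M + 3 * Bc M k) + (M + 3 * Bc M k)"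
      by (simp add: algebra_simps)
    ultimately show ?thesis by linarith
  qed
  finally show ?thesis by simp
qed

lemma build_simplex:
  fixes x :: "nat \<Rightarrow> 'a::real_inner"
  assumes near: "\<forall>i\<le>n. \<forall>j\<le>n. i \<noteq> j \<longrightarrow> 1 - M * \<epsilon> \<le> (dist (x i) (x j))^2 \<and> dist (x i) (x j) \<le> 1"
    and eps: "0 \<le> \<epsilon>" and M: "0 \<le> M"
    and small: "(M + 3 * Bc M n) * \<epsilon> \<le> 1 / (4 * real (n+1))"
  shows "\<exists>y. (\<forall>i\<le>n. \<forall>j\<le>n. i \<noteq> j \<longrightarrow> dist (y i) (y j) = 1) \<and> (\<forall>i\<le>n. dist (x i) (y i) \<le> Bc M n * \<epsilon>)"
  using near small
proof (induction n)
  case 0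
  show ?case by (rule exI[of _ x]) auto
next
  case (Suc n)
  have mono: "Bc M n \<le> Bc M (Suc n)" by (rule Bc_mono[OF M])
  have "(M + 3 * Bc M n) * \<epsilon> \<le> (M + 3 * Bc M (Suc n)) * \<epsilon>"
    using mono eps by (intro mult_right_mono) auto
  also have "\<dots> \<le> 1 / (4 * real (Suc n + 1))" using Suc.prems(2) .
  also have "\<dots> \<le> 1 / (4 * real (n + 1))" by (simp add: field_simps)
  finally have small': "(M + 3 * Bc M n) * \<epsilon> \<le> 1 / (4 * real (n + 1))" .
  have near': "\<forall>i\<le>n. \<forall>j\<le>n. i \<noteq> j \<longrightarrow> 1 - M * \<epsilon> \<le> (dist (x i) (x j))^2 \<and> dist (x i) (x j) \<le> 1"
    using Suc.prems(1) by auto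
  obtain y where yreg: "\<forall>i\<le>n. \<forall>j\<le>n. i \<noteq> j \<longrightarrow> dist (y i) (y j) = 1"
    and yclose: "\<forall>i\<le>n. dist (x i) (y i) \<le> Bc M n * \<epsilon>"
    using Suc.IH[OF near' small'] by blast
  define E where "E = Bc M n * \<epsilon>"
  define \<eta> where "\<eta> = M * \<epsilon> + 3 * E"
  have E0: "0 \<le> E" using Bc_nonneg[OF M] eps by (simp add: E_def)
  have m0: "0 \<le> M * \<epsilon>" using M eps by simp
  have q4: "1 / (4 * real (n + 1)) \<le> 1/4" by (simp add: field_simps)
  have sm: "M * \<epsilon> + 3 * E \<le> 1 / (4 * real (n + 1))"
    using small' by (simp add: E_def algebra_simps)
  have E4: "E \<le> 1/4" using sm q4 m0 E0 by linarith
  have m4: "M * \<epsilon> \<le> 1/4" using sm q4 m0 E0 by linarith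
  have nearx: "\<forall>i\<le>n. (dist (x (Suc n)) (y i))^2 \<le> 1 + \<eta> \<and> 1 - \<eta> \<le> (dist (x (Suc n)) (y i))^2"
  proof (intro allI impI)
    fix i assume i: "i \<le> n"
    have ne: "Suc n \<noteq> i" using i by simp
    have h: "1 - M * \<epsilon> \<le> (dist (x (Suc n)) (x i))^2 \<and> dist (x (Suc n)) (x i) \<le> 1"
      using Suc.prems(1) i ne by auto
    have c: "dist (x i) (y i) \<le> E" using yclose i by (simp add: E_def)
    have t1: "dist (x (Suc n)) (y i) \<le> dist (x (Suc n)) (x i) + E"
      using dist_triangle[of "x (Suc n)" "y i" "x i"] c by linarith
    have t2: "dist (x (Suc n)) (x i) - E \<le> dist (x (Suc n)) (y i)"
      using dist_triangle[of "x (Suc n)" "x i" "y i"] c dist_commute[of "y i" "x i"] by linarith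
    show "(dist (x (Suc n)) (y i))^2 \<le> 1 + \<eta> \<and> 1 - \<eta> \<le> (dist (x (Suc n)) (y i))^2"
      unfolding \<eta>_def
      using near_aux[of E "M * \<epsilon>" "dist (x (Suc n)) (x i)" "dist (x (Suc n)) (y i)"] E0 E4 m0 m4 h t1 t2
      by auto
  qed
  have eta0: "0 \<le> \<eta>" using m0 E0 by (simp add: \<eta>_def)
  have etas: "\<eta> \<le> 1 / (4 * real (n+1))" using sm by (simp add: \<eta>_def)
  obtain z where z1: "\<forall>i\<le>n. dist z (y i) = 1" and z2: "dist z (x (Suc n)) \<le> (real n + 5) * \<eta>"
    using step_lemma[OF yreg nearx eta0 etas] by blast
  have zb: "(real n + 5) * \<eta> = Bc M (Suc n) * \<epsilon>"
    by (simp add: \<eta>_def E_def algebra_simps)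
  define y' where "y' = y(Suc n := z)"
  have "\<forall>i\<le>Suc n. \<forall>j\<le>Suc n. i \<noteq> j \<longrightarrow> dist (y' i) (y' j) = 1"
  proof (intro allI impI)
    fix i j assume ij: "i \<le> Suc n" "j \<le> Suc n" "i \<noteq> j"
    show "dist (y' i) (y' j) = 1"
    proof (cases "i = Suc n")
      case True
      then have "j \<le> n" using ij by auto
      then show ?thesis using True z1 ij by (simp add: y'_def)
    next
      case False
      then have i': "i \<le> n" using ij by auto
      show ?thesis
      proof (cases "j = Suc n")
        case True
        then show ?thesis using i' z1 ij by (simp add: y'_def dist_commute)
      next
        case False
        then show ?thesis using i' ij yreg by (simp add: y'_def)
      qed
    qed
  qed
  moreover have "\<forall>i\<le>Suc n. dist (x i) (y' i) \<le> Bc M (Suc n) * \<epsilon>"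
  proof (intro allI impI)
    fix i assume i: "i \<le> Suc n"
    show "dist (x i) (y' i) \<le> Bc M (Suc n) * \<epsilon>"
    proof (cases "i = Suc n")
      case True
      then show ?thesis using z2 zb by (simp add: y'_def dist_commute)
    next
      case False
      then have "i \<le> n" using i by auto
      then have "dist (x i) (y' i) \<le> Bc M n * \<epsilon>" using yclose False by (simp add: y'_def)
      also have "\<dots> \<le> Bc M (Suc n) * \<epsilon>" using mono eps by (intro mult_right_mono)
      finally show ?thesis .
    qed
  qed
  ultimately show ?case by blast
qed



lemma inner_expand_aux2:
  fixes u v :: "'a::real_inner"
  shows "inner (c *\<^sub>R u - v) (c *\<^sub>R u - v) = c^2 * inner u u - 2 * c * inner u v + inner v v"
  by (simp add: inner_diff_left inner_diff_right inner_commute power2_eq_square algebra_simps)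

lemma cheb_center:
  fixes x :: "nat \<Rightarrow> 'a::euclidean_space" and d :: nat
  shows "\<exists>c l. (\<forall>i\<le>d. dist c (x i) \<le> cheb_rad (x ` {..d})) \<and> (\<forall>i\<le>d. 0 \<le> l i) \<and> sum l {..d} = 1 \<and>
     (\<Sum>i\<le>d. l i *\<^sub>R x i) = c \<and> (\<forall>i\<le>d. l i \<noteq> 0 \<longrightarrow> dist c (x i) = cheb_rad (x ` {..d}))"
proof -
  define F where "F c = Max ((\<lambda>i. dist c (x i)) ` {..d})" for c
  have Fge: "dist c (x i) \<le> F c" if "i \<le> d" for c i
    unfolding F_def using that by (intro Max_ge) auto
  have Fin: "\<exists>i\<le>d. F c = dist c (x i)" for c
  proof -
    have "F c \<in> (\<lambda>i. dist c (x i)) ` {..d}" unfolding F_def by (intro Max_in) auto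
    then show ?thesis by auto
  qed
  have Flip: "F c \<le> F c' + dist c c'" for c c'
  proof -
    obtain i where i: "i \<le> d" "F c = dist c (x i)" using Fin by blast
    have "dist c (x i) \<le> dist c c' + dist c' (x i)" by (rule dist_triangle)
    then show ?thesis using i Fge[OF i(1), of c'] by linarith
  qed
  have Fcont: "continuous_on UNIV F"
    unfolding continuous_on_iff
  proof (intro ballI allI impI)
    fix c :: 'a and e :: real assume "e > 0"
    show "\<exists>\<delta>>0. \<forall>c'\<in>UNIV. dist c' c < \<delta> \<longrightarrow> dist (F c') (F c) < e"
    proof (intro exI[of _ e] conjI ballI impI)
      fix c' assume "dist c' c < e"
      moreover have "F c' \<le> F c + dist c' c" "F c \<le> F c' + dist c c'" using Flip by auto
      ultimately show "dist (F c') (F c) < e" by (simp add: dist_real_def dist_commute abs_less_iff)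
    qed (use \<open>e > 0\<close> in auto)
  qed
  define r where "r = F (x 0)"
  have r0: "0 \<le> r" unfolding r_def using Fge[of 0 "x 0"] by simp
  obtain c0 where c0: "c0 \<in> cball (x 0) r" "\<forall>y\<in>cball (x 0) r. F c0 \<le> F y"
    using continuous_attains_inf[of "cball (x 0) r" F] r0 continuous_on_subset[OF Fcont]
    by (metis compact_cball cball_eq_empty not_less subset_UNIV)
  have cmin: "F c0 \<le> F c" for c
  proof (cases "c \<in> cball (x 0) r")
    case True then show ?thesis using c0 by blast
  next
    case False
    then have "dist (x 0) c > r" by simp
    moreover have "dist c (x 0) \<le> F c" using Fge[of 0 c] by simp
    moreover have "F c0 \<le> r" using c0(2) r0 unfolding r_def by simp
    ultimately show ?thesis by (simp add: dist_commute)
  qed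
  have SUPeq: "(SUP y\<in>x ` {..d}. dist c y) = F c" for c
  proof -
    have "(SUP y\<in>x ` {..d}. dist c y) = Sup ((\<lambda>i. dist c (x i)) ` {..d})"
      by (simp add: image_image)
    also have "\<dots> = F c" unfolding F_def by (intro cSup_eq_Max) auto
    finally show ?thesis .
  qed
  define R where "R = F c0"
  have rad: "cheb_rad (x ` {..d}) = R"
    unfolding cheb_rad_def SUPeq R_def
    by (intro cInf_eq_minimum) (auto simp: cmin)
  define I where "I = {i. i \<le> d \<and> dist c0 (x i) = R}"
  define K where "K = {y. \<exists>l. (\<forall>i\<le>d. 0 \<le> l i) \<and> sum l {..d} = 1 \<and> (\<forall>i\<le>d. i \<notin> I \<longrightarrow> l i = 0) \<and> (\<Sum>i\<le>d. l i *\<^sub>R x i) = y}"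
  have xK: "x ` I \<subseteq> K"
  proof
    fix z assume "z \<in> x ` I"
    then obtain i where i: "i \<in> I" "z = x i" by blast
    then have id: "i \<le> d" by (simp add: I_def)
    let ?l = "\<lambda>j. if j = i then 1 else 0 :: real"
    have "(\<Sum>j\<le>d. ?l j *\<^sub>R x j) = (\<Sum>j\<le>d. if j = i then x j else 0)"
      by (intro sum.cong) auto
    also have "\<dots> = x i" using id by simp
    finally have "(\<Sum>j\<le>d. ?l j *\<^sub>R x j) = x i" .
    moreover have "sum ?l {..d} = 1" using id by simp
    ultimately show "z \<in> K" unfolding K_def using i by (intro CollectI exI[of _ ?l]) auto
  qed
  have convK: "convex K"
    unfolding convex_def
  proof (intro ballI allI impI)
    fix y1 y2 and u v :: real assume y: "y1 \<in> K" "y2 \<in> K" and uv: "0 \<le> u" "0 \<le> v" "u + v = 1"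
    obtain l1 where l1: "\<forall>i\<le>d. 0 \<le> l1 i" "sum l1 {..d} = 1" "\<forall>i\<le>d. i \<notin> I \<longrightarrow> l1 i = 0" "(\<Sum>i\<le>d. l1 i *\<^sub>R x i) = y1"
      using y(1) unfolding K_def by blast
    obtain l2 where l2: "\<forall>i\<le>d. 0 \<le> l2 i" "sum l2 {..d} = 1" "\<forall>i\<le>d. i \<notin> I \<longrightarrow> l2 i = 0" "(\<Sum>i\<le>d. l2 i *\<^sub>R x i) = y2"
      using y(2) unfolding K_def by blast
    let ?l = "\<lambda>i. u * l1 i + v * l2 i"
    have "(\<Sum>i\<le>d. ?l i *\<^sub>R x i) = u *\<^sub>R y1 + v *\<^sub>R y2"
      by (simp add: scaleR_add_left sum.distrib scaleR_sum_right flip: l1(4) l2(4))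
    moreover have "sum ?l {..d} = 1" using l1(2) l2(2) uv by (simp add: sum.distrib sum_distrib_left[symmetric])
    moreover have "\<forall>i\<le>d. 0 \<le> ?l i" using l1(1) l2(1) uv by simp
    moreover have "\<forall>i\<le>d. i \<notin> I \<longrightarrow> ?l i = 0" using l1(3) l2(3) by simp
    ultimately show "u *\<^sub>R y1 + v *\<^sub>R y2 \<in> K" unfolding K_def by (intro CollectI exI[of _ ?l]) auto
  qed
  have hullK: "convex hull (x ` I) \<subseteq> K" using hull_minimal[of "x ` I" K convex] xK convK by blast
  have c0K: "c0 \<in> K"
  proof (rule ccontr)
    assume "c0 \<notin> K"
    then have nh: "c0 \<notin> convex hull (x ` I)" using hullK by blast
    have finI: "finite I" unfolding I_def by simp
    obtain a b where ab: "inner a c0 < b" "\<forall>z\<in>convex hull (x ` I). b < inner a z"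
      using separating_hyperplane_closed_point[OF convex_convex_hull
          compact_imp_closed[OF finite_imp_compact_convex_hull] nh] finI by blast
    have beta: "inner a (x i - c0) > 0" if "i \<in> I" for i
    proof -
      have "x i \<in> convex hull (x ` I)" using that by (intro hull_inc) auto
      then have "b < inner a (x i)" using ab by blast
      then show ?thesis using ab(1) by (simp add: inner_diff_right)
    qed
    obtain i0 where i0: "i0 \<le> d" "F c0 = dist c0 (x i0)" using Fin by blast
    have i0I: "i0 \<in> I" using i0 by (simp add: I_def R_def)
    have anz: "a \<noteq> 0" using beta[OF i0I] by auto
    have na: "norm a > 0" using anz by simp
    have ev: "\<forall>\<^sub>F t in at_right (0::real). \<forall>i\<in>{..d}. dist (c0 + t *\<^sub>R a) (x i) < R"
    proof (intro eventually_ball_finite ballI)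
      show "finite {..d}" by simp
    next
      fix i assume i: "i \<in> {..d}"
      show "\<forall>\<^sub>F t in at_right (0::real). dist (c0 + t *\<^sub>R a) (x i) < R"
      proof (cases "i \<in> I")
        case True
        define \<beta> where "\<beta> = inner a (x i - c0)"
        have bpos: "\<beta> > 0" using beta[OF True] by (simp add: \<beta>_def)
        have dR: "dist c0 (x i) = R" using True by (simp add: I_def)
        show ?thesis unfolding eventually_at_right_field
        proof (intro exI[of _ "2 * \<beta> / (inner a a)"] conjI allI impI)
          show "0 < 2 * \<beta> / inner a a" using bpos anz by simp
        next
          fix t :: real assume t: "0 < t" "t < 2 * \<beta> / inner a a"
          have aa: "inner a a > 0" using anz by simp
          have "t * inner a a < 2 * \<beta>" using t aa by (simp add: field_simps)
          then have neg: "t * (t * inner a a - 2 * \<beta>) < 0" using t by (simp add: mult_pos_neg)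
          have "c0 + t *\<^sub>R a - x i = t *\<^sub>R a - (x i - c0)" by simp
          then have "(dist (c0 + t *\<^sub>R a) (x i))^2 = inner (t *\<^sub>R a - (x i - c0)) (t *\<^sub>R a - (x i - c0))"
            by (simp only: dist_norm power2_norm_eq_inner)
          also have "\<dots> = t^2 * inner a a - 2 * t * \<beta> + inner (x i - c0) (x i - c0)"
            unfolding \<beta>_def by (rule inner_expand_aux2)
          also have "inner (x i - c0) (x i - c0) = R^2"
            using dR by (simp add: dist_norm power2_norm_eq_inner[symmetric] norm_minus_commute)
          finally have "(dist (c0 + t *\<^sub>R a) (x i))^2 = R^2 + t * (t * inner a a - 2 * \<beta>)"
            by (simp add: power2_eq_square algebra_simps)
          then have "(dist (c0 + t *\<^sub>R a) (x i))^2 < R^2" using neg by linarith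
          moreover have "0 \<le> R" using dR by (metis zero_le_dist)
          ultimately show "dist (c0 + t *\<^sub>R a) (x i) < R"
            by (meson power_less_imp_less_base)
        qed
      next
        case False
        have dlt: "dist c0 (x i) < R"
          using False i Fge[of i c0] by (auto simp: I_def R_def)
        show ?thesis unfolding eventually_at_right_field
        proof (intro exI[of _ "(R - dist c0 (x i)) / norm a"] conjI allI impI)
          show "0 < (R - dist c0 (x i)) / norm a" using dlt na by simp
        next
          fix t :: real assume t: "0 < t" "t < (R - dist c0 (x i)) / norm a"
          have "t * norm a < R - dist c0 (x i)" using t na by (simp add: field_simps)
          moreover have "dist (c0 + t *\<^sub>R a) (x i) \<le> dist (c0 + t *\<^sub>R a) c0 + dist c0 (x i)"
            by (rule dist_triangle)
          moreover have "dist (c0 + t *\<^sub>R a) c0 = t * norm a" using t by (simp add: dist_norm)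
          ultimately show "dist (c0 + t *\<^sub>R a) (x i) < R" by linarith
        qed
      qed
    qed
    obtain t where t: "\<forall>i\<in>{..d}. dist (c0 + t *\<^sub>R a) (x i) < R"
      using eventually_happens'[OF _ ev] by auto
    obtain j where j: "j \<le> d" "F (c0 + t *\<^sub>R a) = dist (c0 + t *\<^sub>R a) (x j)" using Fin by blast
    have "F (c0 + t *\<^sub>R a) < R" using t j by auto
    then show False using cmin[of "c0 + t *\<^sub>R a"] by (simp add: R_def)
  qed
  then obtain l where l: "\<forall>i\<le>d. 0 \<le> l i" "sum l {..d} = 1" "\<forall>i\<le>d. i \<notin> I \<longrightarrow> l i = 0" "(\<Sum>i\<le>d. l i *\<^sub>R x i) = c0"
    unfolding K_def by blast
  show ?thesis
  proof (intro exI[of _ c0] exI[of _ l] conjI)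
    show "\<forall>i\<le>d. dist c0 (x i) \<le> cheb_rad (x ` {..d})" using Fge rad R_def by simp
    show "\<forall>i\<le>d. l i \<noteq> 0 \<longrightarrow> dist c0 (x i) = cheb_rad (x ` {..d})"
      using l(3) rad by (auto simp: I_def)
  qed (use l in auto)
qed


lemma jung_near:
  fixes x :: "nat \<Rightarrow> 'a::euclidean_space" and d :: nat
  assumes d1: "1 \<le> d" and diam: "diameter (x ` {..d}) \<le> 1"
    and eps0: "0 < \<epsilon>" and epsd: "\<epsilon> \<le> 1 / (4 * (real d)^2)"
    and rad: "cheb_rad (x ` {..d}) \<ge> (1 - \<epsilon>) * sqrt (real d / (2 * (real d + 1)))"
  shows "\<forall>i\<le>d. \<forall>j\<le>d. i \<noteq> j \<longrightarrow> 1 - 4 * real d * (real d + 1) * \<epsilon> \<le> (dist (x i) (x j))^2 \<and> dist (x i) (x j) \<le> 1"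
proof -
  obtain c l where cR: "\<forall>i\<le>d. dist c (x i) \<le> cheb_rad (x ` {..d})" and l0: "\<forall>i\<le>d. 0 \<le> l i"
    and l1: "sum l {..d} = 1" and lc: "(\<Sum>i\<le>d. l i *\<^sub>R x i) = c"
    and lact: "\<forall>i\<le>d. l i \<noteq> 0 \<longrightarrow> dist c (x i) = cheb_rad (x ` {..d})"
    using cheb_center[of d x] by blast
  define R where "R = cheb_rad (x ` {..d})"
  define Q where "Q = 2 * R^2"
  define D where "D i j = (dist (x i) (x j))^2" for i j
  have Dle1: "dist (x i) (x j) \<le> 1" if "i \<le> d" "j \<le> d" for i j
  proof -
    have "dist (x i) (x j) \<le> diameter (x ` {..d})"
      using that by (intro diameter_bounded_bound finite_imp_bounded) auto
    then show ?thesis using diam by linarith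
  qed
  have Dle: "D i j \<le> (if i = j then 0 else 1)" if "i \<le> d" "j \<le> d" for i j
  proof (cases "i = j")
    case True then show ?thesis by (simp add: D_def)
  next
    case False
    have "(dist (x i) (x j))^2 \<le> 1^2" using Dle1[OF that] by (intro power_mono) auto
    then show ?thesis using False by (simp add: D_def)
  qed
  have R0: "0 \<le> R"
  proof -
    have "dist c (x 0) \<le> R" using cR by (simp add: R_def)
    then show ?thesis using zero_le_dist[of c "x 0"] by linarith
  qed
  have dd: "(real d + 1) > 0" by simp
  have eps1: "\<epsilon> \<le> 1/4"
  proof -
    have "1 \<le> (real d)^2" using d1 by simp
    then have "1 / (4 * (real d)^2) \<le> 1/4" using d1 by (intro divide_left_mono) auto
    then show ?thesis using epsd by linarith
  qed
  have eps_d2: "2 * \<epsilon> * (real d)^2 \<le> 1/2"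
    using epsd d1 by (simp add: field_simps)
  have Qlo: "(real d + 1) * Q \<ge> (1 - 2 * \<epsilon>) * real d"
  proof -
    have s0: "0 \<le> (1 - \<epsilon>) * sqrt (real d / (2 * (real d + 1)))" using eps1 by simp
    have "((1 - \<epsilon>) * sqrt (real d / (2 * (real d + 1))))^2 \<le> R^2"
      using rad s0 unfolding R_def by (intro power_mono) auto
    then have "(1 - \<epsilon>)^2 * (real d / (2 * (real d + 1))) \<le> R^2"
      by (simp add: power_mult_distrib)
    moreover have "1 - 2 * \<epsilon> \<le> (1 - \<epsilon>)^2" by (simp add: power2_eq_square algebra_simps)
    ultimately have "(1 - 2 * \<epsilon>) * (real d / (2 * (real d + 1))) \<le> R^2"
      by (smt (verit) divide_nonneg_nonneg mult_right_mono of_nat_0_le_iff)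
    then show ?thesis unfolding Q_def using dd by (simp add: field_simps)
  qed
  have lR: "l i * (dist c (x i))^2 = l i * R^2" if "i \<le> d" for i
    using lact that by (cases "l i = 0") (auto simp: R_def)
  have sumzero: "(\<Sum>i\<le>d. l i *\<^sub>R (x i - c)) = 0"
    by (simp add: scaleR_diff_right sum_subtractf lc flip: scaleR_sum_left) (simp add: l1)
  have key: "(\<Sum>i\<le>d. l i * D i j) = Q" if "j \<le> d" "dist c (x j) = R" for j
  proof -
    have e: "D i j = (dist c (x i))^2 - 2 * inner (x i - c) (x j - c) + (dist c (x j))^2" for i
    proof -
      have "x i - x j = (x i - c) - (x j - c)" by simp
      then have "D i j = inner ((x i - c) - (x j - c)) ((x i - c) - (x j - c))"
        by (simp only: D_def dist_norm power2_norm_eq_inner)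
      also have "\<dots> = inner (x i - c) (x i - c) - 2 * inner (x i - c) (x j - c) + inner (x j - c) (x j - c)"
        by (simp add: inner_diff_left inner_diff_right inner_commute)
      finally show ?thesis
        by (simp add: dist_norm power2_norm_eq_inner norm_minus_commute[of c])
    qed
    have "(\<Sum>i\<le>d. l i * D i j) = (\<Sum>i\<le>d. l i * (dist c (x i))^2) - 2 * inner (\<Sum>i\<le>d. l i *\<^sub>R (x i - c)) (x j - c) + (\<Sum>i\<le>d. l i) * (dist c (x j))^2"
      by (simp add: e algebra_simps sum.distrib sum_subtractf sum_distrib_left sum_distrib_right inner_sum_left)
    also have "(\<Sum>i\<le>d. l i * (dist c (x i))^2) = (\<Sum>i\<le>d. l i * R^2)"
      using lR by (intro sum.cong) auto
    finally show ?thesis using sumzero l1 that by (simp add: Q_def sum_distrib_right[symmetric])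
  qed
  have key2: "(\<Sum>i\<le>d. l i * D i j) \<le> 1 - l j" if "j \<le> d" for j
  proof -
    have "(\<Sum>i\<le>d. l i * D i j) \<le> (\<Sum>i\<le>d. l i * (if i = j then 0 else 1))"
      using Dle that l0 by (intro sum_mono mult_left_mono) auto
    also have "\<dots> = (\<Sum>i\<le>d. l i) - l j"
      using that by (simp add: if_distrib sum.If_cases Diff_eq[symmetric] sum_diff1)
    finally show ?thesis using l1 by simp
  qed
  define I where "I = {j. j \<le> d \<and> dist c (x j) = R}"
  have IQ: "Q \<le> 1 - l j" if "j \<in> I" for j
    using key[of j] key2[of j] that by (auto simp: I_def)
  have Isub: "I \<subseteq> {..d}" by (auto simp: I_def)
  have sumI: "sum l I = 1"
  proof -
    have "sum l I = sum l {..d}"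
      using lact by (intro sum.mono_neutral_left) (auto simp: I_def R_def)
    then show ?thesis using l1 by simp
  qed
  have Ifull: "I = {..d}"
  proof (rule ccontr)
    assume "I \<noteq> {..d}"
    then have "I \<subset> {..d}" using Isub by auto
    then have "card I < card {..d}" by (intro psubset_card_mono) auto
    then have kd: "card I \<le> d" by simp
    have "I \<noteq> {}" using sumI by auto
    then have "0 < card I" using finite_subset[OF Isub] card_gt_0_iff by blast
    then have k1: "card I \<ge> 1" by simp
    define k where "k = real (card I)"
    have kpos: "k \<ge> 1" "k \<le> real d" using k1 kd by (auto simp: k_def)
    have "(\<Sum>j\<in>I. Q) \<le> (\<Sum>j\<in>I. 1 - l j)" using IQ by (intro sum_mono) auto
    then have kQ: "k * Q \<le> k - 1" using sumI by (simp add: sum_subtractf k_def)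
    have "real d * (k * Q) \<le> real d * (k - 1)" using kQ by (intro mult_left_mono) auto
    also have "\<dots> \<le> k * (real d - 1)" using kpos by (simp add: algebra_simps)
    finally have "k * (real d * Q) \<le> k * (real d - 1)" by (simp add: algebra_simps)
    then have dQ: "real d * Q \<le> real d - 1" using kpos by simp
    have "(real d + 1) * (real d * Q) \<le> (real d + 1) * (real d - 1)" using dQ by (intro mult_left_mono) auto
    moreover have "real d * ((real d + 1) * Q) \<ge> real d * ((1 - 2 * \<epsilon>) * real d)"
      using Qlo by (intro mult_left_mono) auto
    ultimately have "(1 - 2 * \<epsilon>) * (real d)^2 \<le> (real d)^2 - 1"
      by (simp add: power2_eq_square algebra_simps)
    then show False using eps_d2 by (simp add: algebra_simps)
  qed
  have lub: "l j \<le> 1 - Q" if "j \<le> d" for j using IQ[of j] Ifull that by auto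
  have llb: "l i \<ge> 1 - real d * (1 - Q)" if "i \<le> d" for i
  proof -
    have "sum l {..d} = l i + sum l ({..d} - {i})" using that by (simp add: sum.remove)
    moreover have "sum l ({..d} - {i}) \<le> (\<Sum>j\<in>{..d} - {i}. 1 - Q)" using lub by (intro sum_mono) auto
    moreover have "(\<Sum>j\<in>{..d} - {i}. 1 - Q) = real d * (1 - Q)" using that by simp
    ultimately show ?thesis using l1 by linarith
  qed
  have lhalf: "l i \<ge> 1 / (2 * (real d + 1))" if "i \<le> d" for i
  proof -
    have "(real d + 1) * l i \<ge> (real d + 1) * (1 - real d * (1 - Q))"
      using llb[OF that] by (intro mult_left_mono) auto
    moreover have "(real d + 1) * (1 - real d * (1 - Q)) = 1 - (real d)^2 + real d * ((real d + 1) * Q)"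
      by (simp add: power2_eq_square algebra_simps)
    moreover have "real d * ((real d + 1) * Q) \<ge> real d * ((1 - 2 * \<epsilon>) * real d)"
      using Qlo by (intro mult_left_mono) auto
    moreover have "real d * ((1 - 2 * \<epsilon>) * real d) = (real d)^2 - 2 * \<epsilon> * (real d)^2"
      by (simp add: power2_eq_square algebra_simps)
    ultimately have "(real d + 1) * l i \<ge> 1/2" using eps_d2 by linarith
    then show ?thesis using dd by (simp add: field_simps)
  qed
  show ?thesis
  proof (intro allI impI conjI)
    fix i j assume ij: "i \<le> d" "j \<le> d" "i \<noteq> j"
    show "dist (x i) (x j) \<le> 1" using Dle1 ij by simp
    have nonneg: "0 \<le> l m * (1 - D m j)" if "m \<le> d" for m
      using l0 Dle[OF that ij(2)] that by (intro mult_nonneg_nonneg) (auto split: if_splits)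
    have "l i * (1 - D i j) \<le> (\<Sum>m\<in>{..d} - {j}. l m * (1 - D m j))"
      using ij nonneg by (intro member_le_sum) auto
    also have "\<dots> = (\<Sum>m\<le>d. l m * (1 - D m j)) - l j * (1 - D j j)"
      using ij by (simp add: sum_diff1)
    also have "\<dots> = 1 - Q - l j"
      using key[of j] Ifull ij l1 by (auto simp: I_def D_def algebra_simps sum_subtractf)
    also have "\<dots> \<le> real d - (real d + 1) * Q"
      using llb[OF ij(2)] by (simp add: algebra_simps)
    also have "\<dots> \<le> 2 * \<epsilon> * real d" using Qlo by (simp add: algebra_simps)
    finally have A: "l i * (1 - D i j) \<le> 2 * \<epsilon> * real d" .
    have D1: "0 \<le> 1 - D i j" using Dle[OF ij(1,2)] ij by simp
    have "(1 / (2 * (real d + 1))) * (1 - D i j) \<le> l i * (1 - D i j)"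
      using lhalf[OF ij(1)] D1 by (intro mult_right_mono) auto
    then have "(1 - D i j) / (2 * (real d + 1)) \<le> 2 * \<epsilon> * real d" using A by simp
    then have "1 - D i j \<le> 4 * real d * (real d + 1) * \<epsilon>" using dd by (simp add: field_simps)
    then show "1 - 4 * real d * (real d + 1) * \<epsilon> \<le> (dist (x i) (x j))^2" by (simp add: D_def)
  qed
qed


theorem mainTheorem8:
  "\<exists>c \<epsilon>\<^sub>d. c > 0 \<and> \<epsilon>\<^sub>d > 0 \<and>
     (\<forall>(x :: nat \<Rightarrow> real ^ 'n::finite) \<epsilon>.
        diameter (x ` {0..CARD('n)}) \<le> 1 \<longrightarrow>
        0 < \<epsilon> \<longrightarrow> \<epsilon> \<le> \<epsilon>\<^sub>d \<longrightarrow>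
        cheb_rad (x ` {0..CARD('n)}) \<ge> (1 - \<epsilon>) * sqrt (real CARD('n) / (2 * (real CARD('n) + 1))) \<longrightarrow>
        (\<exists>D. regular_unit_simplex D \<and> haus_dist (x ` {0..CARD('n)}) D \<le> c * \<epsilon>))"
proof -
  define d where "d = CARD('n)"
  have d1: "1 \<le> d" unfolding d_def by (simp add: Suc_le_eq)
  define M where "M = 4 * real d * (real d + 1)"
  have Mpos: "M > 0" using d1 by (simp add: M_def)
  define B where "B = Bc M d"
  have B0: "0 \<le> B" unfolding B_def using Mpos by (intro Bc_nonneg) simp
  define e0 where "e0 = min (1 / (4 * (real d)^2)) (1 / (4 * (real d + 1) * (M + 3 * B)))"
  have e0pos: "e0 > 0" unfolding e0_def using d1 Mpos B0 by simp
  show ?thesis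
  proof (rule exI[of _ "B + 1"], rule exI[of _ e0], intro conjI)
    show "B + 1 > 0" using B0 by simp
    show "e0 > 0" by (rule e0pos)
  next
    show "\<forall>(x :: nat \<Rightarrow> real ^ 'n::finite) \<epsilon>.
        diameter (x ` {0..CARD('n)}) \<le> 1 \<longrightarrow>
        0 < \<epsilon> \<longrightarrow> \<epsilon> \<le> e0 \<longrightarrow>
        cheb_rad (x ` {0..CARD('n)}) \<ge> (1 - \<epsilon>) * sqrt (real CARD('n) / (2 * (real CARD('n) + 1))) \<longrightarrow>
        (\<exists>D. regular_unit_simplex D \<and> haus_dist (x ` {0..CARD('n)}) D \<le> (B + 1) * \<epsilon>)"
  proof (intro allI impI)
    fix x :: "nat \<Rightarrow> real ^ 'n" and \<epsilon> :: real
    assume diam: "diameter (x ` {0..CARD('n)}) \<le> 1" and eps0: "0 < \<epsilon>" and epse: "\<epsilon> \<le> e0"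
      and rad: "cheb_rad (x ` {0..CARD('n)}) \<ge> (1 - \<epsilon>) * sqrt (real CARD('n) / (2 * (real CARD('n) + 1)))"
    have dom: "{0..CARD('n)} = {..d}" by (auto simp: d_def)
    have epsd: "\<epsilon> \<le> 1 / (4 * (real d)^2)" using epse by (simp add: e0_def)
    have near: "\<forall>i\<le>d. \<forall>j\<le>d. i \<noteq> j \<longrightarrow> 1 - 4 * real d * (real d + 1) * \<epsilon> \<le> (dist (x i) (x j))^2 \<and> dist (x i) (x j) \<le> 1"
      using jung_near[OF d1 _ eps0 epsd, of x] diam rad unfolding dom by (simp add: d_def)
    have near': "\<forall>i\<le>d. \<forall>j\<le>d. i \<noteq> j \<longrightarrow> 1 - M * \<epsilon> \<le> (dist (x i) (x j))^2 \<and> dist (x i) (x j) \<le> 1"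
      using near by (simp add: M_def)
    have MB: "M + 3 * B > 0" using Mpos B0 by simp
    have small: "(M + 3 * Bc M d) * \<epsilon> \<le> 1 / (4 * real (d+1))"
    proof -
      have "\<epsilon> \<le> 1 / (4 * (real d + 1) * (M + 3 * B))" using epse by (simp add: e0_def)
      then have "(M + 3 * B) * \<epsilon> \<le> (M + 3 * B) * (1 / (4 * (real d + 1) * (M + 3 * B)))"
        using MB by (intro mult_left_mono) auto
      also have "\<dots> = (M + 3 * B) / ((4 * (real d + 1)) * (M + 3 * B))" by simp
      also have "\<dots> = 1 / (4 * real (d+1))" using MB by simp
      finally show ?thesis by (simp add: B_def)
    qed
    obtain y where yreg: "\<forall>i\<le>d. \<forall>j\<le>d. i \<noteq> j \<longrightarrow> dist (y i) (y j) = 1"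
      and yclose: "\<forall>i\<le>d. dist (x i) (y i) \<le> Bc M d * \<epsilon>"
      using build_simplex[OF near' _ _ small] eps0 Mpos by auto
    define D where "D = y ` {..d}"
    have inj: "inj_on y {..d}"
    proof (rule inj_onI)
      fix i j assume "i \<in> {..d}" "j \<in> {..d}" "y i = y j"
      then show "i = j" using yreg by (metis atMost_iff dist_self zero_neq_one)
    qed
    have reg: "regular_unit_simplex D"
      unfolding regular_unit_simplex_def
    proof (intro conjI ballI impI)
      show "finite D" by (simp add: D_def)
      show "card D = DIM(real ^ 'n) + 1" using inj by (simp add: D_def card_image d_def)
    next
      fix u v assume "u \<in> D" "v \<in> D" "u \<noteq> v"
      then obtain i j where "i \<le> d" "j \<le> d" "u = y i" "v = y j" "i \<noteq> j" by (auto simp: D_def)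
      then show "dist u v = 1" using yreg by simp
    qed
    have cl: "dist (x i) (y i) \<le> (B + 1) * \<epsilon>" if "i \<le> d" for i
    proof -
      have "dist (x i) (y i) \<le> B * \<epsilon>" using yclose that by (simp add: B_def)
      also have "\<dots> \<le> (B + 1) * \<epsilon>" using eps0 by (simp add: algebra_simps)
      finally show ?thesis .
    qed
    have h1: "(SUP a\<in>x ` {..d}. INF b\<in>D. dist a b) \<le> (B + 1) * \<epsilon>"
    proof (rule cSUP_least)
      show "x ` {..d} \<noteq> {}" by simp
    next
      fix a assume "a \<in> x ` {..d}"
      then obtain i where i: "i \<le> d" "a = x i" by auto
      have "(INF b\<in>D. dist a b) \<le> dist a (y i)"
        using i by (intro cINF_lower) (auto simp: D_def intro!: bdd_belowI[of _ 0])
      then show "(INF b\<in>D. dist a b) \<le> (B + 1) * \<epsilon>" using cl i by force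
    qed
    have h2: "(SUP b\<in>D. INF a\<in>x ` {..d}. dist a b) \<le> (B + 1) * \<epsilon>"
    proof (rule cSUP_least)
      show "D \<noteq> {}" by (simp add: D_def)
    next
      fix b assume "b \<in> D"
      then obtain i where i: "i \<le> d" "b = y i" by (auto simp: D_def)
      have "(INF a\<in>x ` {..d}. dist a b) \<le> dist (x i) b"
        using i by (intro cINF_lower) (auto intro!: bdd_belowI[of _ 0])
      then show "(INF a\<in>x ` {..d}. dist a b) \<le> (B + 1) * \<epsilon>" using cl i by force
    qed
    have "haus_dist (x ` {0..CARD('n)}) D \<le> (B + 1) * \<epsilon>"
      unfolding haus_dist_def dom using h1 h2 by simp
    then show "\<exists>D. regular_unit_simplex D \<and> haus_dist (x ` {0..CARD('n)}) D \<le> (B + 1) * \<epsilon>"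
      using reg by blast
  qed
  qed
qed

end
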